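(* Let $P^1,\dots,P^4\in\mathbb{R}^n$ be in general position, let $Q^0$ be the equidistant point from $P^1,\dots,P^4$ with barycentric coordinate $\boldsymbol\lambda^0$, and suppose $\lambda^0_1<0$, $\lambda^0_2<0$, $\lambda^0_3\ge0$, $\lambda^0_4\ge0$. Let $Q^{1(1)}=\pi(Q^0|L(P^2,P^3,P^4))$ and $Q^{1(2)}=\pi(Q^0|L(P^1,P^3,P^4))$, with barycentric coordinates $\boldsymbol\lambda^{1(1)},\boldsymbol\lambda^{1(2)}$ about $P^1,\dots,P^4$, and suppose $\lambda^{1(2)}_1<0$. Suppose further $\lambda^{1(1)}_2<0$, $\lambda^{1(1)}_3\ge0$, $\lambda^{1(1)}_4\ge0$, and let $Q^2=\pi(Q^{1(1)}|L(P^3,P^4))$. Then the center of the smallest enclosing circle of $P^1,\dots,P^4$ is $Q^\ast=Q^2$ and its radius is $d^\ast=d(P^3,Q^2)$.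
   Context: $d$ is the Euclidean distance. Points are in general position if $P^2-P^1,\dots,P^m-P^1$ are linearly independent. $L(S^1,\dots,S^r)$ is the affine subspace spanned by the points; $\pi(Q'|L)$ is the orthogonal projection onto the affine subspace $L$. The barycentric coordinate of $Q\in L(P^1,\dots,P^m)$ is the unique $\boldsymbol\lambda$ with $\sum_i\lambda_i=1$, $Q=\sum_i\lambda_iP^i$. The equidistant point is the unique $Q^0\in L(P^1,\dots,P^m)$ with all $d(P^i,Q^0)$ equal. The smallest enclosing circle has center $Q^\ast$ attaining $\min_Q\max_i d(P^i,Q)$ and radius $d^\ast$ equal to this minimum. *)

theory Defs
  imports "HOL-Analysis.Analysis"
begin

definition gen_pos4 :: "(nat \<Rightarrow> 'a::euclidean_space) \<Rightarrow> bool" where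
  "gen_pos4 P \<longleftrightarrow>
     (\<forall>c::nat \<Rightarrow> real. (\<Sum>i\<in>{2,3,4}. c i *\<^sub>R (P i - P 1)) = 0 \<longrightarrow> c 2 = 0 \<and> c 3 = 0 \<and> c 4 = 0)"

definition bary4 :: "(nat \<Rightarrow> 'a::euclidean_space) \<Rightarrow> 'a \<Rightarrow> (nat \<Rightarrow> real) \<Rightarrow> bool" where
  "bary4 P Q l \<longleftrightarrow> (\<Sum>i=1..4. l i) = 1 \<and> Q = (\<Sum>i=1..4. l i *\<^sub>R P i)"

definition equidistant4 :: "(nat \<Rightarrow> 'a::euclidean_space) \<Rightarrow> 'a \<Rightarrow> bool" where
  "equidistant4 P Q \<longleftrightarrow> Q \<in> affine hull (P ` {1..4}) \<and>
     (\<forall>i\<in>{1..4}. \<forall>j\<in>{1..4}. dist (P i) Q = dist (P j) Q)"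

definition proj :: "'a::euclidean_space \<Rightarrow> 'a set \<Rightarrow> 'a" where
  "proj Q S = closest_point (affine hull S) Q"

definition maxdist4 :: "(nat \<Rightarrow> 'a::euclidean_space) \<Rightarrow> 'a \<Rightarrow> real" where
  "maxdist4 P Q = Max ((\<lambda>i. dist (P i) Q) ` {1..4})"

end

theory Submission imports Defs begin

lemma proj_orth:
  fixes x :: "'a::euclidean_space"
  assumes "S \<noteq> {}" "a \<in> affine hull S" "b \<in> affine hull S"
  shows "inner (x - proj x S) (a - b) = 0" "proj x S \<in> affine hull S"
proof -
  let ?A = "affine hull S" let ?y = "proj x S"
  have ne: "?A \<noteq> {}" using assms by auto
  show yA: "?y \<in> ?A" unfolding proj_def by (rule closest_point_in_set[OF closed_affine_hull ne])
  have cv: "convex ?A" by (simp add: affine_imp_convex)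
  have "?y + 1 *\<^sub>R (a - b) \<in> ?A" "?y + (-1) *\<^sub>R (a - b) \<in> ?A"
    using mem_affine_3_minus[OF affine_affine_hull yA assms(2,3)] by blast+
  from closest_point_dot[OF cv closed_affine_hull this(1), of x]
       closest_point_dot[OF cv closed_affine_hull this(2), of x]
  show "inner (x - proj x S) (a - b) = 0" unfolding proj_def by (simp add: inner_diff_right)
qed

lemma sum4: "(\<Sum>i=1..(4::nat). f i) = f 1 + f 2 + f 3 + (f 4 :: 'b::comm_monoid_add)"
  by (simp add: eval_nat_numeral add.assoc)

lemma bary_unique:
  fixes P :: "nat \<Rightarrow> 'a::euclidean_space"
  and a l :: "nat \<Rightarrow> real"
  assumes gp: "gen_pos4 P" and b: "bary4 P Q l" and a: "a 1 + a 2 + a 3 + a 4 = 1"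
    and Q: "Q = a 1 *\<^sub>R P 1 + a 2 *\<^sub>R P 2 + a 3 *\<^sub>R P 3 + a 4 *\<^sub>R P 4"
  shows "l 1 = a 1 \<and> l 2 = a 2 \<and> l 3 = a 3 \<and> l 4 = a 4"
proof -
  from b have l: "l 1 + l 2 + l 3 + l 4 = 1"
    and Ql: "Q = l 1 *\<^sub>R P 1 + l 2 *\<^sub>R P 2 + l 3 *\<^sub>R P 3 + l 4 *\<^sub>R P 4"
    unfolding bary4_def sum4 by auto
  have e1: "l 1 - a 1 = - ((l 2 - a 2) + (l 3 - a 3) + (l 4 - a 4))" using l a by linarith
  have "(\<Sum>i\<in>{2,3,4}. (l i - a i) *\<^sub>R (P i - P 1)) =
        (l 1 - a 1) *\<^sub>R P 1 + (l 2 - a 2) *\<^sub>R P 2 + (l 3 - a 3) *\<^sub>R P 3 + (l 4 - a 4) *\<^sub>R P 4"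
    unfolding e1 by (simp add: algebra_simps)
  also have "\<dots> = 0" using Q Ql by (simp add: algebra_simps)
  finally have "l 2 - a 2 = 0 \<and> l 3 - a 3 = 0 \<and> l 4 - a 4 = 0"
    by (rule gp[unfolded gen_pos4_def, rule_format, of "\<lambda>i. l i - a i"])
  then show ?thesis using e1 by auto
qed

lemma maxd: "maxdist4 P Q = max (dist (P 1) Q) (max (dist (P 2) Q) (max (dist (P 3) Q) (dist (P 4) Q)))"
proof -
  have "{1..4::nat} = {1,2,3,4}" by auto
  then show ?thesis unfolding maxdist4_def by simp
qed

lemma mid_min:
  fixes A B Q :: "'a::euclidean_space"
  defines "M \<equiv> (1/2) *\<^sub>R (A + B)"
  shows "dist A Q ^2 + dist B Q ^2 = 2 * dist M Q ^2 + 2 * dist A M ^2"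
    "dist A M = dist B M"
  unfolding M_def dist_norm power2_norm_eq_inner
   apply (simp add: inner_diff inner_add algebra_simps inner_commute)
proof -
  have h: "\<And>X::'a. (1/2) *\<^sub>R X + (1/2) *\<^sub>R X = X" by (simp flip: scaleR_add_left)
  have "A - (1/2) *\<^sub>R (A + B) = (1/2) *\<^sub>R (A - B)" "B - (1/2) *\<^sub>R (A + B) = - ((1/2) *\<^sub>R (A - B))"
    by (simp_all add: algebra_simps h)
  then show "norm (A - (1/2) *\<^sub>R (A + B)) = norm (B - (1/2) *\<^sub>R (A + B))"
    by (simp only: norm_minus_cancel)
qed

lemma dist_diff:
  fixes A B Q0 M :: "'a::euclidean_space"
  assumes "dist A Q0 = dist B Q0"
  shows "dist A M ^2 - dist B M ^2 = 2 * inner (A - B) (Q0 - M)"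
proof -
  have "dist A Q0 ^2 = dist B Q0 ^2" using assms by simp
  then show ?thesis unfolding dist_norm power2_norm_eq_inner
    by (simp add: inner_diff inner_add algebra_simps inner_commute)
qed

lemma face:
  fixes X Q0 Pk P3 P4 :: "'a::euclidean_space"
  defines "M \<equiv> (1/2) *\<^sub>R (P3 + P4)"
  assumes uvw: "u + v + w = 1" and X: "X = u *\<^sub>R Pk + v *\<^sub>R P3 + w *\<^sub>R P4"
    and o1: "inner (Q0 - X) (P4 - P3) = 0" and o2: "inner (Q0 - X) (Pk - P3) = 0"
    and o3: "inner (P4 - P3) (Q0 - M) = 0" and u: "u < 0"
  shows "inner (Pk - P3) (Q0 - M) \<le> 0" "inner (X - M) (P4 - P3) = 0"
proof -
  have h: "\<And>X::'a. (1/2) *\<^sub>R X + (1/2) *\<^sub>R X = X" by (simp flip: scaleR_add_left)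
  have u': "u = 1 - v - w" using uvw by simp
  have MP3: "M - P3 = (1/2) *\<^sub>R (P4 - P3)"
    unfolding M_def by (simp add: algebra_simps h)
  have MP4: "P4 - M = (1/2) *\<^sub>R (P4 - P3)"
    unfolding M_def by (simp add: algebra_simps h)
  have "X - M = u *\<^sub>R Pk + v *\<^sub>R P3 + w *\<^sub>R P4 - (u + v + w) *\<^sub>R M"
    using X uvw by simp
  also have "\<dots> = u *\<^sub>R (Pk - M) + v *\<^sub>R (P3 - M) + w *\<^sub>R (P4 - M)"
    by (simp add: algebra_simps)
  also have "P3 - M = - ((1/2) *\<^sub>R (P4 - P3))" using MP3 by (simp add: algebra_simps)
  also note MP4
  also have "\<And>e::'a. v *\<^sub>R (- ((1/2) *\<^sub>R e)) + w *\<^sub>R ((1/2) *\<^sub>R e) = ((w - v)/2) *\<^sub>R e"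
    by (simp add: diff_divide_distrib scaleR_diff_left)
  then have "\<And>e::'a. u *\<^sub>R (Pk - M) + v *\<^sub>R (- ((1/2) *\<^sub>R e)) + w *\<^sub>R ((1/2) *\<^sub>R e) = u *\<^sub>R (Pk - M) + ((w - v)/2) *\<^sub>R e"
    by (metis add.assoc)
  finally have XM: "X - M = u *\<^sub>R (Pk - M) + ((w - v)/2) *\<^sub>R (P4 - P3)" .
  have "inner (X - M) (P4 - P3) = inner (Q0 - M) (P4 - P3) - inner (Q0 - X) (P4 - P3)"
    by (simp add: inner_diff)
  then show o4: "inner (X - M) (P4 - P3) = 0" using o1 o3 by (simp add: inner_commute)
  have "inner (Pk - P3) (X - M) = inner (Pk - M) (X - M) + inner (M - P3) (X - M)"
    by (simp add: inner_diff)
  also have "inner (M - P3) (X - M) = 0" unfolding MP3 using o4 by (simp add: inner_commute)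
  finally have e1: "inner (Pk - P3) (X - M) = inner (Pk - M) (X - M)" by simp
  have "inner (X - M) (X - M) = inner (X - M) (u *\<^sub>R (Pk - M) + ((w - v)/2) *\<^sub>R (P4 - P3))"
    using XM by (rule arg_cong)
  also have "\<dots> = u * inner (X - M) (Pk - M) + ((w - v)/2) * inner (X - M) (P4 - P3)"
    by (simp add: inner_add_right)
  finally have "inner (X - M) (X - M) = u * inner (Pk - M) (X - M)"
    using o4 by (simp add: inner_commute)
  then have "0 \<le> u * inner (Pk - P3) (X - M)" using e1 inner_ge_zero[of "X - M"] by simp
  then have e2: "inner (Pk - P3) (X - M) \<le> 0" using u
    by (simp add: zero_le_mult_iff)
  have "inner (Pk - P3) (Q0 - M) = inner (Pk - P3) (Q0 - X) + inner (Pk - P3) (X - M)"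
    by (simp add: inner_diff)
  then show "inner (Pk - P3) (Q0 - M) \<le> 0" using o2 e2 by (simp add: inner_commute)
qed

theorem theorem10:
  fixes P :: "nat \<Rightarrow> 'a::euclidean_space"
    and Q0 Q11 Q12 Q2 :: 'a
    and l0 l11 l12 :: "nat \<Rightarrow> real"
  assumes gp: "gen_pos4 P"
    and eq: "equidistant4 P Q0"
    and b0: "bary4 P Q0 l0"
    and s0: "l0 1 < 0" "l0 2 < 0" "l0 3 \<ge> 0" "l0 4 \<ge> 0"
    and p11: "Q11 = proj Q0 {P 2, P 3, P 4}"
    and p12: "Q12 = proj Q0 {P 1, P 3, P 4}"
    and b11: "bary4 P Q11 l11"
    and b12: "bary4 P Q12 l12"
    and s12: "l12 1 < 0"
    and s11: "l11 2 < 0" "l11 3 \<ge> 0" "l11 4 \<ge> 0"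
    and p2: "Q2 = proj Q11 {P 3, P 4}"
  shows "(\<forall>Q. maxdist4 P Q2 \<le> maxdist4 P Q)
       \<and> (\<forall>Q. maxdist4 P Q = maxdist4 P Q2 \<longrightarrow> Q = Q2)
       \<and> maxdist4 P Q2 = dist (P 3) Q2"
proof -
  define M where "M = (1/2) *\<^sub>R (P 3 + P 4)"
  have h: "\<And>X::'a. (1/2) *\<^sub>R X + (1/2) *\<^sub>R X = X" by (simp flip: scaleR_add_left)
  have eqa: "\<forall>i\<in>{1..4}. \<forall>j\<in>{1..4}. dist (P i) Q0 = dist (P j) Q0"
    using eq unfolding equidistant4_def by (rule conjunct2)
  have three: "(3::nat) \<in> {1..4}" by simp
  have d: "dist (P i) Q0 = dist (P 3) Q0" if "i \<in> {1..4}" for i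
    using eqa that three by blast
  have d4: "dist (P 4) Q0 = dist (P 3) Q0" "dist (P 1) Q0 = dist (P 3) Q0"
     "dist (P 2) Q0 = dist (P 3) Q0" by (rule d; simp)+
  have o3: "inner (P 4 - P 3) (Q0 - M) = 0"
    using dist_diff[OF d4(1), of M] mid_min(2)[where A="P 3" and B="P 4"] unfolding M_def
    by (simp add: dist_commute)
  let ?S1 = "{P 2, P 3, P 4}"
  have in1: "P 2 \<in> affine hull ?S1" "P 3 \<in> affine hull ?S1" "P 4 \<in> affine hull ?S1"
    by (auto intro: hull_inc)
  have q11a: "Q11 \<in> affine hull ?S1" unfolding p11 by (rule proj_orth(2)[of ?S1 "P 2" "P 2" Q0]) (use in1 in auto)
  then obtain u v w where uvw: "u + v + w = 1" and X1: "Q11 = u *\<^sub>R P 2 + v *\<^sub>R P 3 + w *\<^sub>R P 4"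
    unfolding affine_hull_3 by auto
  have "l11 2 = u"
    using bary_unique[OF gp b11, of "\<lambda>i. if i = 2 then u else if i = 3 then v else if i = 4 then w else 0"]
      uvw X1 by simp
  then have u: "u < 0" using s11 by simp
  have oa: "inner (Q0 - Q11) (P 4 - P 3) = 0" "inner (Q0 - Q11) (P 2 - P 3) = 0"
    unfolding p11 by (rule proj_orth(1); use in1 in blast)+
  have f1: "inner (P 2 - P 3) (Q0 - M) \<le> 0" "inner (Q11 - M) (P 4 - P 3) = 0"
    using face[OF uvw X1 oa o3[unfolded M_def] u] unfolding M_def by auto
  let ?S2 = "{P 1, P 3, P 4}"
  have in2: "P 1 \<in> affine hull ?S2" "P 3 \<in> affine hull ?S2" "P 4 \<in> affine hull ?S2"
    by (auto intro: hull_inc)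
  have q12a: "Q12 \<in> affine hull ?S2" unfolding p12 by (rule proj_orth(2)[of ?S2 "P 1" "P 1" Q0]) (use in2 in auto)
  then obtain u' v' w' where uvw': "u' + v' + w' = 1" and X2: "Q12 = u' *\<^sub>R P 1 + v' *\<^sub>R P 3 + w' *\<^sub>R P 4"
    unfolding affine_hull_3 by auto
  have "l12 1 = u'"
    using bary_unique[OF gp b12, of "\<lambda>i. if i = 1 then u' else if i = 3 then v' else if i = 4 then w' else 0"]
      uvw' X2 by simp
  then have u': "u' < 0" using s12 by simp
  have ob: "inner (Q0 - Q12) (P 4 - P 3) = 0" "inner (Q0 - Q12) (P 1 - P 3) = 0"
    unfolding p12 by (rule proj_orth(1); use in2 in blast)+
  have f2: "inner (P 1 - P 3) (Q0 - M) \<le> 0"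
    using face(1)[OF uvw' X2 ob o3[unfolded M_def] u'] unfolding M_def by auto
  have in3: "P 3 \<in> affine hull {P 3, P 4}" "P 4 \<in> affine hull {P 3, P 4}"
    by (auto intro: hull_inc)
  have o5: "inner (Q11 - Q2) (P 4 - P 3) = 0" unfolding p2
    by (rule proj_orth(1)) (use in3 in auto)
  have "Q2 \<in> affine hull {P 3, P 4}" unfolding p2 by (rule proj_orth(2)[of _ "P 3" "P 3"]) (use in3 in auto)
  then obtain s t where st: "s + t = 1" and Q2st: "Q2 = s *\<^sub>R P 3 + t *\<^sub>R P 4"
    unfolding affine_hull_2 by auto
  have Q2M: "Q2 - M = ((t - s)/2) *\<^sub>R (P 4 - P 3)"
  proof -
    have s': "s = 1 - t" using st by simp
    show ?thesis unfolding Q2st M_def s'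
      by (simp add: algebra_simps diff_divide_distrib h)
  qed
  have "inner (Q2 - M) (P 4 - P 3) = inner (Q11 - M) (P 4 - P 3) - inner (Q11 - Q2) (P 4 - P 3)"
    by (simp add: inner_diff)
  then have "inner (Q2 - M) (P 4 - P 3) = 0" using o5 f1 by simp
  then have "((t - s)/2) * inner (P 4 - P 3) (P 4 - P 3) = 0" unfolding Q2M by simp
  then have "Q2 - M = 0" unfolding Q2M by auto
  then have Q2: "Q2 = M" by simp
  have r1: "dist (P 1) M \<le> dist (P 3) M"
  proof (rule power2_le_imp_le)
    show "dist (P 1) M ^2 \<le> dist (P 3) M ^2" using dist_diff[OF d4(2), of M] f2 by linarith
  qed simp
  have r2: "dist (P 2) M \<le> dist (P 3) M"
  proof (rule power2_le_imp_le)
    show "dist (P 2) M ^2 \<le> dist (P 3) M ^2" using dist_diff[OF d4(3), of M] f1(1) by linarith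
  qed simp
  have r4: "dist (P 4) M = dist (P 3) M" using mid_min(2)[where A="P 3" and B="P 4"] unfolding M_def by simp
  have mx: "maxdist4 P Q2 = dist (P 3) Q2"
    unfolding maxd Q2 using r1 r2 r4 by (simp add: dist_commute max_def)
  have key: "dist (P 3) Q ^2 + dist (P 4) Q ^2 = 2 * dist M Q ^2 + 2 * dist (P 3) M ^2" for Q
    using mid_min(1)[where A="P 3" and B="P 4" and Q=Q] unfolding M_def by simp
  have lb: "dist (P 3) M \<le> maxdist4 P Q" for Q
  proof (rule ccontr)
    assume "\<not> ?thesis"
    then have a: "dist (P 3) Q < dist (P 3) M" "dist (P 4) Q < dist (P 3) M" unfolding maxd by auto
    then have "dist (P 3) Q ^2 < dist (P 3) M ^2" "dist (P 4) Q ^2 < dist (P 3) M ^2"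
      by (auto intro!: power_strict_mono)
    then show False using key[of Q] zero_le_power2[of "dist M Q"] by linarith
  qed
  have un: "Q = M" if "maxdist4 P Q = dist (P 3) M" for Q
  proof -
    have "dist (P 3) Q \<le> dist (P 3) M" "dist (P 4) Q \<le> dist (P 3) M" using that unfolding maxd by auto
    then have "dist (P 3) Q ^2 \<le> dist (P 3) M ^2" "dist (P 4) Q ^2 \<le> dist (P 3) M ^2"
      by (auto intro!: power_mono)
    then have "dist M Q ^2 \<le> 0" using key[of Q] by linarith
    then show ?thesis by simp
  qed
  have A: "\<forall>Q. maxdist4 P Q2 \<le> maxdist4 P Q"
  proof
    fix Q show "maxdist4 P Q2 \<le> maxdist4 P Q" using lb[of Q] mx Q2 by simp
  qed
  have B: "\<forall>Q. maxdist4 P Q = maxdist4 P Q2 \<longrightarrow> Q = Q2"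
  proof (intro allI impI)
    fix Q assume "maxdist4 P Q = maxdist4 P Q2"
    then have "maxdist4 P Q = dist (P 3) M" using mx Q2 by simp
    then show "Q = Q2" unfolding Q2 by (rule un)
  qed
  show ?thesis using A B mx by blast
qed

end
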